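(* Let $A$ be a complete noetherian local ring that is not regular. Then any minimal Cohen presentation $\pi\colon Q\to A$ is basically regular and not flat.
   Context: All rings are commutative and noetherian with identity. A Cohen presentation of a complete local ring $A$ is a surjective ring homomorphism $\pi\colon (Q,r)\to A$ with $Q$ a complete regular local ring; it is minimal if $\ker(\pi)\subseteq r^2$. A local homomorphism $\varphi\colon(A,m)\to(B,n)$ ($\varphi(m)\subseteq n$) is basically regular if for every minimal basis (minimal generating set) $x_1,\dots,x_r$ of $m$, the elements $\varphi(x_1),\dots,\varphi(x_r)$ are part of a minimal basis of $n$ (vacuously true if $A$ is a field). *)

theory Defs
  imports "HOL-Algebra.Algebra" "HOL-Library.Extended_Nat"
begin

definition local_ring :: "('a, 'b) ring_scheme \<Rightarrow> bool" where
  "local_ring R \<longleftrightarrow> cring R \<and> noetherian_ring R \<and> (\<exists>!m. maximalideal m R)"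

definition max_ideal :: "('a, 'b) ring_scheme \<Rightarrow> 'a set" where
  "max_ideal R = (THE m. maximalideal m R)"

fun ideal_pow :: "('a, 'b) ring_scheme \<Rightarrow> 'a set \<Rightarrow> nat \<Rightarrow> 'a set" where
  "ideal_pow R I 0 = carrier R"
| "ideal_pow R I (Suc n) = ideal_prod R (ideal_pow R I n) I"

definition madic_complete :: "('a, 'b) ring_scheme \<Rightarrow> bool" where
  "madic_complete R \<longleftrightarrow>
     (\<Inter>k. ideal_pow R (max_ideal R) k) = {\<zero>\<^bsub>R\<^esub>} \<and>
     (\<forall>x :: nat \<Rightarrow> 'a. range x \<subseteq> carrier R \<and>
        (\<forall>k. \<exists>N. \<forall>i\<ge>N. \<forall>j\<ge>N. x i \<ominus>\<^bsub>R\<^esub> x j \<in> ideal_pow R (max_ideal R) k)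
        \<longrightarrow> (\<exists>l\<in>carrier R. \<forall>k. \<exists>N. \<forall>i\<ge>N. x i \<ominus>\<^bsub>R\<^esub> l \<in> ideal_pow R (max_ideal R) k))"

definition complete_local_ring :: "('a, 'b) ring_scheme \<Rightarrow> bool" where
  "complete_local_ring R \<longleftrightarrow> local_ring R \<and> madic_complete R"

definition krull_dim :: "('a, 'b) ring_scheme \<Rightarrow> enat" where
  "krull_dim R = Sup {enat n | n. \<exists>P :: nat \<Rightarrow> 'a set.
      (\<forall>i\<le>n. primeideal (P i) R) \<and> (\<forall>i<n. P i \<subset> P (Suc i))}"

definition generates :: "('a, 'b) ring_scheme \<Rightarrow> 'a set \<Rightarrow> 'a set \<Rightarrow> bool" where
  "generates R S I \<longleftrightarrow> finite S \<and> S \<subseteq> carrier R \<and> Idl\<^bsub>R\<^esub> S = I"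

definition emb_dim :: "('a, 'b) ring_scheme \<Rightarrow> nat" where
  "emb_dim R = (LEAST n. \<exists>S. generates R S (max_ideal R) \<and> card S = n)"

definition regular_local_ring :: "('a, 'b) ring_scheme \<Rightarrow> bool" where
  "regular_local_ring R \<longleftrightarrow> local_ring R \<and> krull_dim R = enat (emb_dim R)"

definition minimal_basis :: "('a, 'b) ring_scheme \<Rightarrow> 'a set \<Rightarrow> 'a set \<Rightarrow> bool" where
  "minimal_basis R I S \<longleftrightarrow> generates R S I \<and> (\<forall>T. T \<subset> S \<longrightarrow> Idl\<^bsub>R\<^esub> T \<noteq> I)"

definition basically_regular ::
  "('a, 'c) ring_scheme \<Rightarrow> ('b, 'd) ring_scheme \<Rightarrow> ('a \<Rightarrow> 'b) \<Rightarrow> bool" where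
  "basically_regular A B \<phi> \<longleftrightarrow>
     local_ring A \<and> local_ring B \<and> \<phi> \<in> ring_hom A B \<and> \<phi> ` max_ideal A \<subseteq> max_ideal B \<and>
     (\<forall>S. minimal_basis A (max_ideal A) S \<longrightarrow>
        inj_on \<phi> S \<and> (\<exists>T. \<phi> ` S \<subseteq> T \<and> minimal_basis B (max_ideal B) T))"

definition cohen_presentation ::
  "('a, 'c) ring_scheme \<Rightarrow> ('b, 'd) ring_scheme \<Rightarrow> ('a \<Rightarrow> 'b) \<Rightarrow> bool" where
  "cohen_presentation Q A \<pi> \<longleftrightarrow>
     complete_local_ring Q \<and> regular_local_ring Q \<and> \<pi> \<in> ring_hom Q A \<and> \<pi> ` carrier Q = carrier A"

definition minimal_cohen_presentation ::
  "('a, 'c) ring_scheme \<Rightarrow> ('b, 'd) ring_scheme \<Rightarrow> ('a \<Rightarrow> 'b) \<Rightarrow> bool" where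
  "minimal_cohen_presentation Q A \<pi> \<longleftrightarrow>
     cohen_presentation Q A \<pi> \<and> a_kernel Q A \<pi> \<subseteq> ideal_prod Q (max_ideal Q) (max_ideal Q)"

text \<open>Flatness of B as a module over A via \<phi> (equational criterion: every linear
  relation in B with coefficients in A is trivial).\<close>

definition flat_hom ::
  "('a, 'c) ring_scheme \<Rightarrow> ('b, 'd) ring_scheme \<Rightarrow> ('a \<Rightarrow> 'b) \<Rightarrow> bool" where
  "flat_hom A B \<phi> \<longleftrightarrow>
     (\<forall>n (f :: nat \<Rightarrow> 'a) (x :: nat \<Rightarrow> 'b).
        f ` {..<n} \<subseteq> carrier A \<and> x ` {..<n} \<subseteq> carrier B \<and>
        (\<Oplus>\<^bsub>B\<^esub> i\<in>{..<n}. \<phi> (f i) \<otimes>\<^bsub>B\<^esub> x i) = \<zero>\<^bsub>B\<^esub> \<longrightarrow>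
        (\<exists>m (a :: nat \<Rightarrow> nat \<Rightarrow> 'a) (y :: nat \<Rightarrow> 'b).
           y ` {..<m} \<subseteq> carrier B \<and>
           (\<forall>i<n. \<forall>j<m. a i j \<in> carrier A) \<and>
           (\<forall>i<n. x i = (\<Oplus>\<^bsub>B\<^esub> j\<in>{..<m}. \<phi> (a i j) \<otimes>\<^bsub>B\<^esub> y j)) \<and>
           (\<forall>j<m. (\<Oplus>\<^bsub>A\<^esub> i\<in>{..<n}. f i \<otimes>\<^bsub>A\<^esub> a i j) = \<zero>\<^bsub>A\<^esub>)))"

end

theory Submission
  imports Defs
begin

lemma local_max:
  fixes R :: "('a,'b) ring_scheme" (structure)
  assumes "local_ring R"
  shows "maximalideal (max_ideal R) R"
proof -
  from assms obtain M where "maximalideal M R" unfolding local_ring_def by blast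
  then show ?thesis using assms unfolding local_ring_def max_ideal_def by (metis theI')
qed

lemma local_max_unique:
  fixes R :: "('a,'b) ring_scheme" (structure)
  assumes "local_ring R" "maximalideal M R"
  shows "M = max_ideal R"
  using assms local_max unfolding local_ring_def by blast

lemma local_ideal_sub:
  fixes R :: "('a,'b) ring_scheme" (structure)
  assumes "local_ring R" "ideal J R" "J \<noteq> carrier R"
  shows "J \<subseteq> max_ideal R"
proof -
  interpret cring R using assms unfolding local_ring_def by blast
  define F where "F = {K. ideal K R \<and> J \<subseteq> K \<and> \<one> \<notin> K}"
  have oneJ: "\<one> \<notin> J" using assms(2,3) ideal.one_imp_carrier by blast
  have "\<exists>M\<in>F. \<forall>Y\<in>F. M \<subseteq> Y \<longrightarrow> Y = M"
  proof (rule subset_Zorn_nonempty)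
    show "F \<noteq> {}" using assms(2) oneJ unfolding F_def by blast
  next
    fix C assume C: "C \<noteq> {}" "subset.chain F C"
    have "subset.chain {I. ideal I R} C" using C(2) unfolding F_def pred_on.chain_def by blast
    from chain_Union_is_ideal[OF this] C(1) have "ideal (\<Union>C) R" by simp
    moreover have "J \<subseteq> \<Union>C" using C unfolding F_def pred_on.chain_def by blast
    moreover have "\<one> \<notin> \<Union>C" using C unfolding F_def pred_on.chain_def by blast
    ultimately show "\<Union>C \<in> F" unfolding F_def by blast
  qed
  then obtain M where M: "M \<in> F" "\<And>Y. Y \<in> F \<Longrightarrow> M \<subseteq> Y \<Longrightarrow> Y = M" by blast
  have "maximalideal M R"
  proof (rule maximalidealI)
    show "ideal M R" using M(1) F_def by blast
    show "carrier R \<noteq> M" using M(1) F_def by blast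
    fix K assume K: "ideal K R" "M \<subseteq> K" "K \<subseteq> carrier R"
    show "K = M \<or> K = carrier R"
    proof (cases "\<one> \<in> K")
      case True then show ?thesis using K(1) ideal.one_imp_carrier by blast
    next
      case False then have "K \<in> F" using K M(1) F_def by blast
      then show ?thesis using M(2) K(2) by blast
    qed
  qed
  then have "M = max_ideal R" using local_max_unique assms(1) by blast
  then show ?thesis using M(1) F_def by blast
qed

lemma local_one_notin:
  fixes R :: "('a,'b) ring_scheme" (structure)
  assumes "local_ring R"
  shows "\<one>\<^bsub>R\<^esub> \<notin> max_ideal R"
  using local_max[OF assms] maximalideal.I_notcarr ideal.one_imp_carrier maximalideal.axioms(1)
  by metis

lemma local_unit:
  fixes R :: "('a,'b) ring_scheme" (structure)
  assumes "local_ring R" "x \<in> carrier R" "x \<notin> max_ideal R"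
  shows "x \<in> Units R"
proof (rule ccontr)
  assume nu: "x \<notin> Units R"
  interpret cring R using assms unfolding local_ring_def by blast
  have id: "ideal (PIdl x) R" using cgenideal_ideal assms(2) by blast
  have "PIdl x \<noteq> carrier R"
  proof
    assume "PIdl x = carrier R"
    then have "\<one> \<in> PIdl x" by simp
    then obtain y where "y \<in> carrier R" "\<one> = y \<otimes> x" unfolding cgenideal_def by blast
    then have "x \<in> Units R" using assms(2) m_comm unfolding Units_def by auto
    with nu show False by simp
  qed
  then have "PIdl x \<subseteq> max_ideal R" using local_ideal_sub[OF assms(1) id] by simp
  moreover have "x \<in> PIdl x" using cgenideal_self assms(2) by blast
  ultimately show False using assms(3) by blast
qed

lemma surj_image_ideal:
  assumes h: "ring_hom_ring R S h" and surj: "h ` carrier R = carrier S" and I: "ideal I R"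
  shows "ideal (h ` I) S"
proof -
  interpret ring_hom_ring R S h by (rule h)
  have Isub: "I \<subseteq> carrier R" using I ideal.axioms(1) additive_subgroup.a_subset by blast
  show ?thesis
  proof (rule idealI)
    show "ring S" using h unfolding ring_hom_ring_def by blast
  next
    show "subgroup (h ` I) (add_monoid S)"
    proof (rule S.add.subgroupI)
      show "h ` I \<subseteq> carrier S" using Isub by auto
      show "h ` I \<noteq> {}" using additive_subgroup.zero_closed[OF ideal.axioms(1)[OF I]] by blast
    next
      fix a assume "a \<in> h ` I"
      then obtain x where x: "x \<in> I" "a = h x" by blast
      then have "x \<in> carrier R" using Isub by blast
      then have "h (\<ominus>\<^bsub>R\<^esub> x) = \<ominus>\<^bsub>S\<^esub> a" using x by simp
      moreover have "\<ominus>\<^bsub>R\<^esub> x \<in> I" using additive_subgroup.a_inv_closed[OF ideal.axioms(1)[OF I] x(1)] .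
      ultimately show "\<ominus>\<^bsub>S\<^esub> a \<in> h ` I" by (metis image_eqI)
    next
      fix a b assume "a \<in> h ` I" "b \<in> h ` I"
      then obtain x y where xy: "x \<in> I" "a = h x" "y \<in> I" "b = h y" by blast
      then have "x \<in> carrier R" "y \<in> carrier R" using Isub by auto
      then have "h (x \<oplus>\<^bsub>R\<^esub> y) = a \<oplus>\<^bsub>S\<^esub> b" using xy by simp
      moreover have "x \<oplus>\<^bsub>R\<^esub> y \<in> I" using additive_subgroup.a_closed[OF ideal.axioms(1)[OF I] xy(1) xy(3)] .
      ultimately show "a \<oplus>\<^bsub>S\<^esub> b \<in> h ` I" by (metis image_eqI)
    qed
  next
    fix a x assume a: "a \<in> h ` I" and x: "x \<in> carrier S"
    then obtain y z where yz: "y \<in> I" "a = h y" "z \<in> carrier R" "x = h z" using surj by blast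
    then have yc: "y \<in> carrier R" using Isub by blast
    have "x \<otimes>\<^bsub>S\<^esub> a = h (z \<otimes>\<^bsub>R\<^esub> y)" using yz yc by simp
    moreover have "z \<otimes>\<^bsub>R\<^esub> y \<in> I" using ideal.I_l_closed[OF I yz(1) yz(3)] .
    ultimately show "x \<otimes>\<^bsub>S\<^esub> a \<in> h ` I" by blast
    have "a \<otimes>\<^bsub>S\<^esub> x = h (y \<otimes>\<^bsub>R\<^esub> z)" using yz yc by simp
    moreover have "y \<otimes>\<^bsub>R\<^esub> z \<in> I" using ideal.I_r_closed[OF I yz(1) yz(3)] .
    ultimately show "a \<otimes>\<^bsub>S\<^esub> x \<in> h ` I" by blast
  qed
qed

lemma surj_image_Idl:
  fixes R :: "('a,'b) ring_scheme" and S :: "('c,'d) ring_scheme"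
  assumes h: "ring_hom_ring R S h" and surj: "h ` carrier R = carrier S" and G: "G \<subseteq> carrier R"
  shows "Idl\<^bsub>S\<^esub> (h ` G) = h ` (Idl\<^bsub>R\<^esub> G)"
proof
  interpret ring_hom_ring R S h by (rule h)
  have "ideal (h ` (Idl\<^bsub>R\<^esub> G)) S" using surj_image_ideal[OF h surj] R.genideal_ideal[OF G] by blast
  moreover have "h ` G \<subseteq> h ` (Idl\<^bsub>R\<^esub> G)" using R.genideal_self[OF G] by blast
  ultimately show "Idl\<^bsub>S\<^esub> (h ` G) \<subseteq> h ` (Idl\<^bsub>R\<^esub> G)" using S.genideal_minimal by blast
next
  interpret ring_hom_ring R S h by (rule h)
  have hX: "h ` G \<subseteq> carrier S" using G by auto
  have "ideal {r \<in> carrier R. h r \<in> Idl\<^bsub>S\<^esub> (h ` G)} R" using ideal_vimage S.genideal_ideal[OF hX] by blast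
  moreover have "G \<subseteq> {r \<in> carrier R. h r \<in> Idl\<^bsub>S\<^esub> (h ` G)}" using G S.genideal_self[OF hX] by blast
  ultimately have "Idl\<^bsub>R\<^esub> G \<subseteq> {r \<in> carrier R. h r \<in> Idl\<^bsub>S\<^esub> (h ` G)}" using R.genideal_minimal by blast
  then show "h ` (Idl\<^bsub>R\<^esub> G) \<subseteq> Idl\<^bsub>S\<^esub> (h ` G)" by (intro image_subsetI) blast
qed

lemma sum_ideal:
  fixes R :: "('a,'b) ring_scheme" (structure)
  assumes "cring R" "ideal J R" "ideal L R" "s \<in> carrier R"
  shows "ideal {j \<oplus> c \<otimes> s | j c. j \<in> J \<and> c \<in> L} R"
proof -
  interpret cring R by fact
  have Jc: "J \<subseteq> carrier R" using assms(2) ideal.axioms(1) additive_subgroup.a_subset by blast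
  have Lc: "L \<subseteq> carrier R" using assms(3) ideal.axioms(1) additive_subgroup.a_subset by blast
  let ?K = "{j \<oplus> c \<otimes> s | j c. j \<in> J \<and> c \<in> L}"
  have mulK: "x \<otimes> k \<in> ?K" if kk: "k \<in> ?K" and xx: "x \<in> carrier R" for x k
  proof -
    obtain j c where jc: "k = j \<oplus> c \<otimes> s" "j \<in> J" "c \<in> L" using kk by blast
    have jcc: "j \<in> carrier R" "c \<in> carrier R" using jc Jc Lc by auto
    have e1: "x \<otimes> k = x \<otimes> j \<oplus> x \<otimes> (c \<otimes> s)"
      using jc(1) jcc xx assms(4) r_distr by simp
    have e2: "x \<otimes> (c \<otimes> s) = (x \<otimes> c) \<otimes> s"
      using jcc xx assms(4) m_assoc by simp
    have "x \<otimes> k = x \<otimes> j \<oplus> (x \<otimes> c) \<otimes> s" using e1 e2 by simp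
    moreover have "x \<otimes> j \<in> J" using ideal.I_l_closed[OF assms(2) jc(2) xx] .
    moreover have "x \<otimes> c \<in> L" using ideal.I_l_closed[OF assms(3) jc(3) xx] .
    ultimately show ?thesis by blast
  qed
  show ?thesis
  proof (rule idealI)
    show "ring R" by (rule ring_axioms)
  next
    show "subgroup ?K (add_monoid R)"
    proof (rule add.subgroupI)
      show "?K \<subseteq> carrier R" using Jc Lc assms(4) by auto
      have "\<zero> \<oplus> \<zero> \<otimes> s \<in> ?K" using assms(2,3) additive_subgroup.zero_closed ideal.axioms(1) by blast
      then show "?K \<noteq> {}" by blast
    next
      fix a assume "a \<in> ?K"
      then obtain j c where jc: "a = j \<oplus> c \<otimes> s" "j \<in> J" "c \<in> L" by blast
      then have jcc: "j \<in> carrier R" "c \<in> carrier R" using Jc Lc by auto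
      have "\<ominus> a = (\<ominus> j) \<oplus> (\<ominus> c) \<otimes> s" unfolding jc(1) using jcc assms(4) by algebra
      moreover have "\<ominus> j \<in> J" using additive_subgroup.a_inv_closed[OF ideal.axioms(1)[OF assms(2)] jc(2)] by simp
      moreover have "\<ominus> c \<in> L" using additive_subgroup.a_inv_closed[OF ideal.axioms(1)[OF assms(3)] jc(3)] by simp
      ultimately show "\<ominus> a \<in> ?K" by blast
    next
      fix a b assume "a \<in> ?K" "b \<in> ?K"
      then obtain j c j' c' where jc: "a = j \<oplus> c \<otimes> s" "j \<in> J" "c \<in> L" "b = j' \<oplus> c' \<otimes> s" "j' \<in> J" "c' \<in> L" by blast
      then have jcc: "j \<in> carrier R" "c \<in> carrier R" "j' \<in> carrier R" "c' \<in> carrier R" using Jc Lc by auto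
      have "a \<oplus> b = (j \<oplus> j') \<oplus> (c \<oplus> c') \<otimes> s" unfolding jc(1,4) using jcc assms(4) by algebra
      moreover have "j \<oplus> j' \<in> J" using additive_subgroup.a_closed[OF ideal.axioms(1)[OF assms(2)] jc(2) jc(5)] by simp
      moreover have "c \<oplus> c' \<in> L" using additive_subgroup.a_closed[OF ideal.axioms(1)[OF assms(3)] jc(3) jc(6)] by simp
      ultimately show "a \<oplus> b \<in> ?K" by blast
    qed
  next
    fix a x assume "a \<in> ?K" "x \<in> carrier R"
    then show "x \<otimes> a \<in> ?K" by (rule mulK)
    have "a \<in> carrier R" using \<open>a \<in> ?K\<close> Jc Lc assms(4) by auto
    then have eq: "a \<otimes> x = x \<otimes> a" using m_comm[OF _ \<open>x \<in> carrier R\<close>] by blast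
    show "a \<otimes> x \<in> ?K" by (subst eq) (rule mulK[OF \<open>a \<in> ?K\<close> \<open>x \<in> carrier R\<close>])
  qed
qed

lemma nak_step:
  fixes R :: "('a,'b) ring_scheme" (structure)
  assumes loc: "local_ring R" and Sc: "S \<subseteq> carrier R" and s0: "s0 \<in> S"
    and gen: "Idl S = max_ideal R" and j: "j \<in> Idl (S - {s0})"
    and sq: "s0 \<ominus> j \<in> ideal_prod R (max_ideal R) (max_ideal R)"
  shows "s0 \<in> Idl (S - {s0})"
proof -
  interpret cring R using loc unfolding local_ring_def by blast
  define r where "r = max_ideal R"
  define J where "J = Idl (S - {s0})"
  have s0c: "s0 \<in> carrier R" using Sc s0 by blast
  have Jid: "ideal J R" unfolding J_def using genideal_ideal Sc by blast
  have rid: "ideal r R" unfolding r_def using local_max[OF loc] maximalideal.axioms(1) by blast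
  have Jc: "J \<subseteq> carrier R" using Jid ideal.axioms(1) additive_subgroup.a_subset by blast
  have rc: "r \<subseteq> carrier R" using rid ideal.axioms(1) additive_subgroup.a_subset by blast
  define K' where "K' = {j \<oplus> c \<otimes> s0 | j c. j \<in> J \<and> c \<in> carrier R}"
  define K where "K = {j \<oplus> c \<otimes> s0 | j c. j \<in> J \<and> c \<in> r}"
  have K'id: "ideal K' R" unfolding K'_def using sum_ideal[OF is_cring Jid oneideal s0c] .
  have Kid: "ideal K R" unfolding K_def using sum_ideal[OF is_cring Jid rid s0c] .
  have "S \<subseteq> K'"
  proof
    fix s assume s: "s \<in> S"
    show "s \<in> K'"
    proof (cases "s = s0")
      case True
      have "\<zero> \<in> J" using additive_subgroup.zero_closed[OF ideal.axioms(1)[OF Jid]] .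
      moreover have "s = \<zero> \<oplus> \<one> \<otimes> s0" using True s0c by simp
      ultimately show ?thesis unfolding K'_def by blast
    next
      case False
      then have "s \<in> J" unfolding J_def using genideal_self[of "S - {s0}"] Sc s by blast
      moreover have "s = s \<oplus> \<zero> \<otimes> s0" using s Sc s0c by auto
      ultimately show ?thesis unfolding K'_def by blast
    qed
  qed
  then have rK': "r \<subseteq> K'" using genideal_minimal[OF K'id] gen r_def by blast
  have "ideal_prod R r r \<subseteq> K"
  proof
    fix x assume "x \<in> ideal_prod R r r"
    then show "x \<in> K"
    proof (induct x rule: ideal_prod.induct)
      case (prod a b)
      then obtain j q where jq: "b = j \<oplus> q \<otimes> s0" "j \<in> J" "q \<in> carrier R" using rK' K'_def by blast
      have ac: "a \<in> carrier R" using prod rc by blast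
      have jc: "j \<in> carrier R" using jq Jc by blast
      have "a \<otimes> b = a \<otimes> j \<oplus> (a \<otimes> q) \<otimes> s0" unfolding jq(1) using ac jc jq(3) s0c by algebra
      moreover have "a \<otimes> j \<in> J" using ideal.I_l_closed[OF Jid jq(2) ac] .
      moreover have "a \<otimes> q \<in> r" using ideal.I_r_closed[OF rid prod(1) jq(3)] .
      ultimately show ?case unfolding K_def by blast
    next
      case (sum s1 s2)
      then show ?case using additive_subgroup.a_closed[OF ideal.axioms(1)[OF Kid]] by blast
    qed
  qed
  then have "s0 \<ominus> j \<in> K" using sq r_def by blast
  then obtain j' c where jc: "s0 \<ominus> j = j' \<oplus> c \<otimes> s0" "j' \<in> J" "c \<in> r" unfolding K_def by blast
  have jC: "j \<in> carrier R" using j J_def Jc by blast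
  have j'C: "j' \<in> carrier R" using jc Jc by blast
  have cC: "c \<in> carrier R" using jc rc by blast
  have "(\<one> \<ominus> c) \<otimes> s0 = (s0 \<ominus> j) \<oplus> j \<ominus> c \<otimes> s0" using cC s0c jC by algebra
  also have "\<dots> = (j' \<oplus> c \<otimes> s0) \<oplus> j \<ominus> c \<otimes> s0" using jc(1) by simp
  also have "\<dots> = j' \<oplus> j" using cC s0c jC j'C by algebra
  finally have ueq: "(\<one> \<ominus> c) \<otimes> s0 = j' \<oplus> j" .
  have "j' \<oplus> j \<in> J" using additive_subgroup.a_closed[OF ideal.axioms(1)[OF Jid] jc(2)] j J_def by blast
  then have uJ: "(\<one> \<ominus> c) \<otimes> s0 \<in> J" using ueq by simp
  have uC: "\<one> \<ominus> c \<in> carrier R" using cC by simp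
  have "\<one> \<ominus> c \<notin> r"
  proof
    assume "\<one> \<ominus> c \<in> r"
    then have "(\<one> \<ominus> c) \<oplus> c \<in> r" using additive_subgroup.a_closed[OF ideal.axioms(1)[OF rid] _ jc(3)] by blast
    moreover have "(\<one> \<ominus> c) \<oplus> c = \<one>" using cC by algebra
    ultimately show False using local_one_notin[OF loc] r_def by simp
  qed
  then have uU: "\<one> \<ominus> c \<in> Units R" using local_unit[OF loc uC] r_def by simp
  have "inv (\<one> \<ominus> c) \<otimes> ((\<one> \<ominus> c) \<otimes> s0) = s0"
    using m_assoc[OF Units_inv_closed[OF uU] uC s0c, symmetric] Units_l_inv[OF uU] s0c by simp
  moreover have "inv (\<one> \<ominus> c) \<otimes> ((\<one> \<ominus> c) \<otimes> s0) \<in> J"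
    using ideal.I_l_closed[OF Jid uJ] uU by simp
  ultimately show ?thesis unfolding J_def by simp
qed

lemma image_max:
  fixes Q :: "('a,'c) ring_scheme" and A :: "('b,'d) ring_scheme"
  assumes lQ: "local_ring Q" and lA: "local_ring A" and h: "ring_hom_ring Q A \<pi>"
    and surj: "\<pi> ` carrier Q = carrier A"
    and ker: "a_kernel Q A \<pi> \<subseteq> ideal_prod Q (max_ideal Q) (max_ideal Q)"
  shows "\<pi> ` max_ideal Q = max_ideal A"
proof -
  interpret Q: cring Q using lQ unfolding local_ring_def by blast
  interpret A: cring A using lA unfolding local_ring_def by blast
  interpret ring_hom_ring Q A \<pi> by (rule h)
  define r where "r = max_ideal Q"
  have rid: "ideal r Q" unfolding r_def using local_max[OF lQ] maximalideal.axioms(1) by blast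
  have rc: "r \<subseteq> carrier Q" using rid ideal.axioms(1) additive_subgroup.a_subset by blast
  have mid: "ideal (max_ideal A) A" using local_max[OF lA] maximalideal.axioms(1) by blast
  have imid: "ideal (\<pi> ` r) A" using surj_image_ideal[OF h surj rid] .
  have rr: "ideal_prod Q r r \<subseteq> r" using Q.ideal_prod_inter[OF rid rid] by blast
  have "\<pi> ` r \<noteq> carrier A"
  proof
    assume "\<pi> ` r = carrier A"
    then obtain x where x: "x \<in> r" "\<pi> x = \<one>\<^bsub>A\<^esub>" by (metis A.one_closed imageE)
    have xc: "x \<in> carrier Q" using x rc by blast
    have "\<pi> (\<one>\<^bsub>Q\<^esub> \<ominus>\<^bsub>Q\<^esub> x) = \<zero>\<^bsub>A\<^esub>" using xc x(2) by (simp add: a_minus_def A.r_neg)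
    then have "\<one>\<^bsub>Q\<^esub> \<ominus>\<^bsub>Q\<^esub> x \<in> a_kernel Q A \<pi>" unfolding a_kernel_def' using xc by simp
    then have "\<one>\<^bsub>Q\<^esub> \<ominus>\<^bsub>Q\<^esub> x \<in> r" using ker rr r_def by blast
    then have "(\<one>\<^bsub>Q\<^esub> \<ominus>\<^bsub>Q\<^esub> x) \<oplus>\<^bsub>Q\<^esub> x \<in> r"
      using additive_subgroup.a_closed[OF ideal.axioms(1)[OF rid] _ x(1)] by blast
    moreover have "(\<one>\<^bsub>Q\<^esub> \<ominus>\<^bsub>Q\<^esub> x) \<oplus>\<^bsub>Q\<^esub> x = \<one>\<^bsub>Q\<^esub>" using xc by algebra
    ultimately show False using local_one_notin[OF lQ] r_def by simp
  qed
  then have sub1: "\<pi> ` r \<subseteq> max_ideal A" using local_ideal_sub[OF lA imid] by blast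
  define P where "P = {x \<in> carrier Q. \<pi> x \<in> max_ideal A}"
  have Pid: "ideal P Q" unfolding P_def using ideal_vimage[OF mid] .
  have "P \<noteq> carrier Q"
  proof
    assume "P = carrier Q"
    then have "\<pi> \<one>\<^bsub>Q\<^esub> \<in> max_ideal A" unfolding P_def by blast
    then show False using local_one_notin[OF lA] by simp
  qed
  then have Pr: "P \<subseteq> r" using local_ideal_sub[OF lQ Pid] r_def by blast
  have "max_ideal A \<subseteq> \<pi> ` r"
  proof
    fix y assume y: "y \<in> max_ideal A"
    then have "y \<in> carrier A" using mid ideal.axioms(1) additive_subgroup.a_subset by blast
    then obtain x where "x \<in> carrier Q" "y = \<pi> x" using surj by blast
    then have "x \<in> P" using y P_def by blast
    then show "y \<in> \<pi> ` r" using Pr \<open>y = \<pi> x\<close> by blast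
  qed
  then show ?thesis using sub1 r_def by blast
qed

lemma basic_reg_part:
  fixes Q :: "('a,'c) ring_scheme" and A :: "('b,'d) ring_scheme"
  assumes lQ: "local_ring Q" and lA: "local_ring A" and hom: "\<pi> \<in> ring_hom Q A"
    and surj: "\<pi> ` carrier Q = carrier A"
    and ker: "a_kernel Q A \<pi> \<subseteq> ideal_prod Q (max_ideal Q) (max_ideal Q)"
  shows "basically_regular Q A \<pi>"
proof -
  interpret Q: cring Q using lQ unfolding local_ring_def by blast
  interpret A: cring A using lA unfolding local_ring_def by blast
  have h: "ring_hom_ring Q A \<pi>" using hom by (simp add: Q.ring_axioms A.ring_axioms ring_hom_ringI2)
  interpret ring_hom_ring Q A \<pi> by (rule h)
  have im: "\<pi> ` max_ideal Q = max_ideal A" using image_max[OF lQ lA h surj ker] .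
  have main: "inj_on \<pi> S \<and> (\<exists>T. \<pi> ` S \<subseteq> T \<and> minimal_basis A (max_ideal A) T)"
    if mb: "minimal_basis Q (max_ideal Q) S" for S
  proof -
    have fin: "finite S" and Sc: "S \<subseteq> carrier Q" and gen: "Idl\<^bsub>Q\<^esub> S = max_ideal Q"
      and irr: "\<And>T. T \<subset> S \<Longrightarrow> Idl\<^bsub>Q\<^esub> T \<noteq> max_ideal Q"
      using mb unfolding minimal_basis_def generates_def by auto
    have C: "\<pi> s0 \<notin> Idl\<^bsub>A\<^esub> (\<pi> ` (S - {s0}))" if s0: "s0 \<in> S" for s0
    proof
      assume a: "\<pi> s0 \<in> Idl\<^bsub>A\<^esub> (\<pi> ` (S - {s0}))"
      have Sc': "S - {s0} \<subseteq> carrier Q" using Sc by blast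
      have eq: "Idl\<^bsub>A\<^esub> (\<pi> ` (S - {s0})) = \<pi> ` (Idl\<^bsub>Q\<^esub> (S - {s0}))"
        using surj_image_Idl[OF h surj Sc'] .
      have "\<pi> s0 \<in> \<pi> ` (Idl\<^bsub>Q\<^esub> (S - {s0}))" using a unfolding eq .
      then obtain j where j: "j \<in> Idl\<^bsub>Q\<^esub> (S - {s0})" "\<pi> s0 = \<pi> j" by (rule imageE) simp
      have jc: "j \<in> carrier Q" using ideal.Icarr[OF Q.genideal_ideal[OF Sc'] j(1)] .
      have s0c: "s0 \<in> carrier Q" using s0 Sc by blast
      have "\<pi> (s0 \<ominus>\<^bsub>Q\<^esub> j) = \<zero>\<^bsub>A\<^esub>" using jc s0c j(2) by (simp add: a_minus_def A.r_neg)
      then have "s0 \<ominus>\<^bsub>Q\<^esub> j \<in> a_kernel Q A \<pi>" unfolding a_kernel_def' using jc s0c by simp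
      then have "s0 \<ominus>\<^bsub>Q\<^esub> j \<in> ideal_prod Q (max_ideal Q) (max_ideal Q)" using ker by blast
      then have s0J: "s0 \<in> Idl\<^bsub>Q\<^esub> (S - {s0})" using nak_step[OF lQ Sc s0 gen j(1)] by blast
      have "S \<subseteq> Idl\<^bsub>Q\<^esub> (S - {s0})" using s0J Q.genideal_self[OF Sc'] by blast
      then have "Idl\<^bsub>Q\<^esub> S \<subseteq> Idl\<^bsub>Q\<^esub> (S - {s0})" using Q.genideal_minimal[OF Q.genideal_ideal[OF Sc']] by blast
      moreover have "Idl\<^bsub>Q\<^esub> (S - {s0}) \<subseteq> Idl\<^bsub>Q\<^esub> S" using Q.subset_Idl_subset[OF Sc] by blast
      ultimately have "Idl\<^bsub>Q\<^esub> (S - {s0}) = max_ideal Q" using gen by blast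
      moreover have "S - {s0} \<subset> S" using s0 by blast
      ultimately show False using irr by blast
    qed
    have inj: "inj_on \<pi> S"
    proof (rule inj_onI)
      fix x y assume xy: "x \<in> S" "y \<in> S" "\<pi> x = \<pi> y"
      show "x = y"
      proof (rule ccontr)
        assume "x \<noteq> y"
        then have "\<pi> y \<in> \<pi> ` (S - {x})" using xy by blast
        moreover have "\<pi> ` (S - {x}) \<subseteq> carrier A" using Sc by auto
        ultimately have "\<pi> y \<in> Idl\<^bsub>A\<^esub> (\<pi> ` (S - {x}))" using A.genideal_self[of "\<pi> ` (S - {x})"] by blast
        then have "\<pi> x \<in> Idl\<^bsub>A\<^esub> (\<pi> ` (S - {x}))" using xy(3) by simp
        then show False using C[OF xy(1)] by blast
      qed
    qed
    have piSc: "\<pi> ` S \<subseteq> carrier A" using Sc by auto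
    have genA: "Idl\<^bsub>A\<^esub> (\<pi> ` S) = max_ideal A" using surj_image_Idl[OF h surj Sc] gen im by simp
    have "minimal_basis A (max_ideal A) (\<pi> ` S)"
      unfolding minimal_basis_def generates_def
    proof (intro conjI allI impI)
      show "finite (\<pi> ` S)" using fin by simp
      show "\<pi> ` S \<subseteq> carrier A" by (rule piSc)
      show "Idl\<^bsub>A\<^esub> (\<pi> ` S) = max_ideal A" by (rule genA)
      fix T assume T: "T \<subset> \<pi> ` S"
      show "Idl\<^bsub>A\<^esub> T \<noteq> max_ideal A"
      proof
        assume TI: "Idl\<^bsub>A\<^esub> T = max_ideal A"
        obtain s0 where s0: "s0 \<in> S" "\<pi> s0 \<notin> T" using T by blast
        have "T \<subseteq> \<pi> ` (S - {s0})" using T s0 by blast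
        moreover have "\<pi> ` (S - {s0}) \<subseteq> carrier A" using Sc by auto
        ultimately have "Idl\<^bsub>A\<^esub> T \<subseteq> Idl\<^bsub>A\<^esub> (\<pi> ` (S - {s0}))" using A.subset_Idl_subset[of "\<pi> ` (S - {s0})" T] by blast
        moreover have "\<pi> s0 \<in> max_ideal A" using im s0(1) gen Q.genideal_self[OF Sc] by blast
        ultimately show False using C[OF s0(1)] TI by blast
      qed
    qed
    then show ?thesis using inj by blast
  qed
  show ?thesis unfolding basically_regular_def using lQ lA hom im main by blast
qed

lemma finsum_in_ideal:
  fixes R :: "('a,'b) ring_scheme" (structure)
  fixes n :: nat
  assumes R: "ring R" and I: "ideal I R"
  shows "(\<forall>i<n. g i \<in> I) \<longrightarrow> (\<Oplus>i\<in>{..<n}. g i) \<in> I"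
proof (induct n)
  interpret ring R by (rule R)
  case 0
  then show ?case using additive_subgroup.zero_closed[OF ideal.axioms(1)[OF I]] by simp
next
  interpret ring R by (rule R)
  case (Suc n)
  show ?case
  proof
  assume prems: "\<forall>i<Suc n. g i \<in> I"
  have Ic: "I \<subseteq> carrier R" using I ideal.axioms(1) additive_subgroup.a_subset by blast
  have gI: "\<forall>i<n. g i \<in> I" using prems by simp
  have fc: "g \<in> {..<n} \<rightarrow> carrier R" using gI Ic by auto
  have gn: "g n \<in> I" using prems by simp
  have "(\<Oplus>i\<in>{..<Suc n}. g i) = g n \<oplus> (\<Oplus>i\<in>{..<n}. g i)"
    unfolding lessThan_Suc using finsum_insert[OF _ _ fc] gn Ic by auto
  moreover have "(\<Oplus>i\<in>{..<n}. g i) \<in> I" using Suc gI by blast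
  ultimately show "(\<Oplus>i\<in>{..<Suc n}. g i) \<in> I" using additive_subgroup.a_closed[OF ideal.axioms(1)[OF I] gn] by simp
  qed
qed

lemma finsum_one:
  fixes R :: "('a,'b) ring_scheme" (structure)
  assumes R: "ring R" and "g 0 \<in> carrier R"
  shows "(\<Oplus>i\<in>{..<Suc 0}. g i) = g 0"
proof -
  interpret ring R by (rule R)
  have "{..<Suc 0} = insert 0 {}" by auto
  then show ?thesis using finsum_insert[of "{}" 0 g] assms(2) by simp
qed

lemma flat_ker:
  fixes Q :: "('a,'c) ring_scheme" and A :: "('b,'d) ring_scheme"
  assumes lQ: "local_ring Q" and lA: "local_ring A" and hom: "\<pi> \<in> ring_hom Q A"
    and surj: "\<pi> ` carrier Q = carrier A"
    and ker: "a_kernel Q A \<pi> \<subseteq> ideal_prod Q (max_ideal Q) (max_ideal Q)"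
    and fl: "flat_hom Q A \<pi>"
  shows "inj_on \<pi> (carrier Q)"
proof -
  interpret Q: cring Q using lQ unfolding local_ring_def by blast
  interpret A: cring A using lA unfolding local_ring_def by blast
  have h: "ring_hom_ring Q A \<pi>" using hom by (simp add: Q.ring_axioms A.ring_axioms ring_hom_ringI2)
  interpret ring_hom_ring Q A \<pi> by (rule h)
  have im: "\<pi> ` max_ideal Q = max_ideal A" using image_max[OF lQ lA h surj ker] .
  have mid: "ideal (max_ideal A) A" using local_max[OF lA] maximalideal.axioms(1) by blast
  have "a_kernel Q A \<pi> \<subseteq> {\<zero>\<^bsub>Q\<^esub>}"
  proof
    fix f assume "f \<in> a_kernel Q A \<pi>"
    then have fc: "f \<in> carrier Q" and f0: "\<pi> f = \<zero>\<^bsub>A\<^esub>" unfolding a_kernel_def' by auto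
    have s: "(\<Oplus>\<^bsub>A\<^esub> i\<in>{..<Suc 0}. \<pi> f \<otimes>\<^bsub>A\<^esub> \<one>\<^bsub>A\<^esub>) = \<zero>\<^bsub>A\<^esub>"
      using finsum_one[OF A.ring_axioms, of "\<lambda>i. \<pi> f \<otimes>\<^bsub>A\<^esub> \<one>\<^bsub>A\<^esub>"] fc f0 by simp
    have p1: "(\<lambda>_. f) ` {..<Suc 0} \<subseteq> carrier Q" using fc by auto
    have p2: "(\<lambda>_. \<one>\<^bsub>A\<^esub>) ` {..<Suc 0} \<subseteq> carrier A" by auto
    have ex: "\<exists>m (a :: nat \<Rightarrow> nat \<Rightarrow> 'a) (y :: nat \<Rightarrow> 'b).
           y ` {..<m} \<subseteq> carrier A \<and>
           (\<forall>i<Suc 0. \<forall>j<m. a i j \<in> carrier Q) \<and>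
           (\<forall>i<Suc 0. \<one>\<^bsub>A\<^esub> = (\<Oplus>\<^bsub>A\<^esub> j\<in>{..<m}. \<pi> (a i j) \<otimes>\<^bsub>A\<^esub> y j)) \<and>
           (\<forall>j<m. (\<Oplus>\<^bsub>Q\<^esub> i\<in>{..<Suc 0}. f \<otimes>\<^bsub>Q\<^esub> a i j) = \<zero>\<^bsub>Q\<^esub>)"
      using fl p1 p2 s unfolding flat_hom_def
      apply -
      apply (drule spec[where x="Suc 0"])
      apply (drule spec[where x="\<lambda>_. f"])
      apply (drule spec[where x="\<lambda>_. \<one>\<^bsub>A\<^esub>"])
      apply (drule mp)
       apply (intro conjI; assumption)
      apply assumption
      done
    then obtain m :: nat and a :: "nat \<Rightarrow> nat \<Rightarrow> 'a" and y :: "nat \<Rightarrow> 'b" where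
      H: "y ` {..<m} \<subseteq> carrier A \<and>
           (\<forall>i<Suc 0. \<forall>j<m. a i j \<in> carrier Q) \<and>
           (\<forall>i<Suc 0. \<one>\<^bsub>A\<^esub> = (\<Oplus>\<^bsub>A\<^esub> j\<in>{..<m}. \<pi> (a i j) \<otimes>\<^bsub>A\<^esub> y j)) \<and>
           (\<forall>j<m. (\<Oplus>\<^bsub>Q\<^esub> i\<in>{..<Suc 0}. f \<otimes>\<^bsub>Q\<^esub> a i j) = \<zero>\<^bsub>Q\<^esub>)"
      by (elim exE) (rule that)
    have y: "y ` {..<m} \<subseteq> carrier A" using H by (rule conjunct1)
    have ac: "\<forall>i<Suc 0. \<forall>j<m. a i j \<in> carrier Q" using H by (elim conjE)
    have x1': "\<forall>i<Suc 0. \<one>\<^bsub>A\<^esub> = (\<Oplus>\<^bsub>A\<^esub> j\<in>{..<m}. \<pi> (a i j) \<otimes>\<^bsub>A\<^esub> y j)" using H by (elim conjE)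
    have rel: "\<forall>j<m. (\<Oplus>\<^bsub>Q\<^esub> i\<in>{..<Suc 0}. f \<otimes>\<^bsub>Q\<^esub> a i j) = \<zero>\<^bsub>Q\<^esub>" using H by (elim conjE)
    have x1: "\<one>\<^bsub>A\<^esub> = (\<Oplus>\<^bsub>A\<^esub> j\<in>{..<m}. \<pi> (a 0 j) \<otimes>\<^bsub>A\<^esub> y j)" using x1' by simp
    have rel0: "f \<otimes>\<^bsub>Q\<^esub> a 0 j = \<zero>\<^bsub>Q\<^esub>" if "j < m" for j
      using rel that finsum_one[OF Q.ring_axioms, of "\<lambda>i. f \<otimes>\<^bsub>Q\<^esub> a i j"] fc ac by simp
    have "\<exists>j<m. a 0 j \<notin> max_ideal Q"
    proof (rule ccontr)
      assume "\<not> (\<exists>j<m. a 0 j \<notin> max_ideal Q)"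
      then have "\<forall>j<m. \<pi> (a 0 j) \<in> max_ideal A" using im by blast
      then have "\<forall>j<m. \<pi> (a 0 j) \<otimes>\<^bsub>A\<^esub> y j \<in> max_ideal A"
        using y ideal.I_r_closed[OF mid] by blast
      then have "(\<Oplus>\<^bsub>A\<^esub> j\<in>{..<m}. \<pi> (a 0 j) \<otimes>\<^bsub>A\<^esub> y j) \<in> max_ideal A"
        using finsum_in_ideal[OF A.ring_axioms mid, of m "\<lambda>j. \<pi> (a 0 j) \<otimes>\<^bsub>A\<^esub> y j"] by blast
      then have "\<one>\<^bsub>A\<^esub> \<in> max_ideal A" using x1 by simp
      then show False using local_one_notin[OF lA] by simp
    qed
    then obtain j where j: "j < m" "a 0 j \<notin> max_ideal Q" by blast
    have ajc: "a 0 j \<in> carrier Q" using ac j by simp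
    have u: "a 0 j \<in> Units Q" using local_unit[OF lQ ajc j(2)] .
    have "f = (f \<otimes>\<^bsub>Q\<^esub> a 0 j) \<otimes>\<^bsub>Q\<^esub> inv\<^bsub>Q\<^esub> (a 0 j)"
      using Q.m_assoc[OF fc ajc Q.Units_inv_closed[OF u]] Q.Units_r_inv[OF u] fc by simp
    also have "\<dots> = \<zero>\<^bsub>Q\<^esub>" using rel0[OF j(1)] Q.Units_inv_closed[OF u] by simp
    finally show "f \<in> {\<zero>\<^bsub>Q\<^esub>}" by simp
  qed
  moreover have "\<zero>\<^bsub>Q\<^esub> \<in> a_kernel Q A \<pi>" unfolding a_kernel_def' by simp
  ultimately have "a_kernel Q A \<pi> = {\<zero>\<^bsub>Q\<^esub>}" by blast
  then show ?thesis using trivial_ker_imp_inj by blast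
qed

lemma iso_basic:
  fixes R :: "('a,'c) ring_scheme" and S :: "('b,'d) ring_scheme"
  assumes lR: "local_ring R" and lS: "local_ring S" and iso: "h \<in> ring_iso R S"
  shows "ring_hom_ring R S h" and "h ` carrier R = carrier S" and "inj_on h (carrier R)"
proof -
  interpret R: cring R using lR unfolding local_ring_def by blast
  interpret S: cring S using lS unfolding local_ring_def by blast
  have hom: "h \<in> ring_hom R S" using iso unfolding ring_iso_def by blast
  show "ring_hom_ring R S h" using hom by (simp add: R.ring_axioms S.ring_axioms ring_hom_ringI2)
  show "h ` carrier R = carrier S" using iso unfolding ring_iso_def bij_betw_def by blast
  show "inj_on h (carrier R)" using iso unfolding ring_iso_def bij_betw_def by blast
qed

lemma iso_prime:
  fixes R :: "('a,'c) ring_scheme" and S :: "('b,'d) ring_scheme"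
  assumes lR: "local_ring R" and lS: "local_ring S" and iso: "h \<in> ring_iso R S"
    and P: "primeideal P R"
  shows "primeideal (h ` P) S"
proof -
  interpret R: cring R using lR unfolding local_ring_def by blast
  interpret S: cring S using lS unfolding local_ring_def by blast
  note hb = iso_basic[OF lR lS iso]
  interpret ring_hom_ring R S h by (rule hb(1))
  have Pid: "ideal P R" using P primeideal.axioms(1) by blast
  have Pc: "P \<subseteq> carrier R" using Pid ideal.axioms(1) additive_subgroup.a_subset by blast
  show ?thesis
  proof (rule primeidealI)
    show "ideal (h ` P) S" using surj_image_ideal[OF hb(1) hb(2) Pid] .
    show "cring S" by (rule S.is_cring)
    show "carrier S \<noteq> h ` P"
    proof
      assume "carrier S = h ` P"
      then obtain p where p: "p \<in> P" "h p = \<one>\<^bsub>S\<^esub>" by (metis S.one_closed imageE)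
      then have "h p = h \<one>\<^bsub>R\<^esub>" by simp
      then have "p = \<one>\<^bsub>R\<^esub>" using hb(3) p(1) Pc R.one_closed unfolding inj_on_def by blast
      then have "\<one>\<^bsub>R\<^esub> \<in> P" using p by simp
      then have "P = carrier R" using ideal.one_imp_carrier[OF Pid] by blast
      then show False using primeideal.I_notcarr[OF P] by simp
    qed
    fix a b assume ab: "a \<in> carrier S" "b \<in> carrier S" "a \<otimes>\<^bsub>S\<^esub> b \<in> h ` P"
    obtain a' b' where a'b': "a' \<in> carrier R" "a = h a'" "b' \<in> carrier R" "b = h b'" using ab(1,2) hb(2) by blast
    obtain p where p: "p \<in> P" "a \<otimes>\<^bsub>S\<^esub> b = h p" using ab(3) by blast
    have "h (a' \<otimes>\<^bsub>R\<^esub> b') = h p" using a'b' p by simp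
    then have "a' \<otimes>\<^bsub>R\<^esub> b' = p" using hb(3) p(1) Pc a'b' unfolding inj_on_def by (meson R.m_closed subsetD)
    then have "a' \<otimes>\<^bsub>R\<^esub> b' \<in> P" using p by simp
    then have "a' \<in> P \<or> b' \<in> P" using primeideal.I_prime[OF P a'b'(1) a'b'(3)] by simp
    then show "a \<in> h ` P \<or> b \<in> h ` P" using a'b' by blast
  qed
qed

lemma iso_max:
  fixes R :: "('a,'c) ring_scheme" and S :: "('b,'d) ring_scheme"
  assumes lR: "local_ring R" and lS: "local_ring S" and iso: "h \<in> ring_iso R S"
  shows "max_ideal S = h ` max_ideal R"
proof -
  interpret R: cring R using lR unfolding local_ring_def by blast
  interpret S: cring S using lS unfolding local_ring_def by blast
  note hb = iso_basic[OF lR lS iso]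
  interpret ring_hom_ring R S h by (rule hb(1))
  define M where "M = max_ideal R"
  have Mm: "maximalideal M R" unfolding M_def using local_max[OF lR] .
  have Mid: "ideal M R" using Mm maximalideal.axioms(1) by blast
  have Mc: "M \<subseteq> carrier R" using Mid ideal.axioms(1) additive_subgroup.a_subset by blast
  have "maximalideal (h ` M) S"
  proof (rule maximalidealI)
    show "ideal (h ` M) S" using surj_image_ideal[OF hb(1) hb(2) Mid] .
    show "carrier S \<noteq> h ` M"
    proof
      assume "carrier S = h ` M"
      then obtain p where p: "p \<in> M" "h p = \<one>\<^bsub>S\<^esub>" by (metis S.one_closed imageE)
      then have "h p = h \<one>\<^bsub>R\<^esub>" by simp
      then have "p = \<one>\<^bsub>R\<^esub>" using hb(3) p(1) Mc R.one_closed unfolding inj_on_def by blast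
      then have "\<one>\<^bsub>R\<^esub> \<in> M" using p by simp
      then have "M = carrier R" using ideal.one_imp_carrier[OF Mid] by blast
      then show False using maximalideal.I_notcarr[OF Mm] by simp
    qed
    fix J assume J: "ideal J S" "h ` M \<subseteq> J" "J \<subseteq> carrier S"
    define P where "P = {x \<in> carrier R. h x \<in> J}"
    have Pid: "ideal P R" unfolding P_def using ideal_vimage[OF J(1)] .
    have "M \<subseteq> P" using J(2) Mc P_def by blast
    then have "P = M \<or> P = carrier R" using maximalideal.I_maximal[OF Mm Pid] P_def by blast
    then show "J = h ` M \<or> J = carrier S"
    proof
      assume "P = M"
      have "J \<subseteq> h ` M"
      proof
        fix y assume y: "y \<in> J"
        then obtain x where "x \<in> carrier R" "y = h x" using J(3) hb(2) by blast
        then show "y \<in> h ` M" using y \<open>P = M\<close> P_def by blast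
      qed
      then show ?thesis using J(2) by blast
    next
      assume "P = carrier R"
      have "carrier S \<subseteq> J"
      proof
        fix y assume "y \<in> carrier S"
        then obtain x where x: "x \<in> carrier R" "y = h x" using hb(2) by blast
        then have "x \<in> P" using \<open>P = carrier R\<close> by simp
        then show "y \<in> J" using x(2) P_def by blast
      qed
      then show ?thesis using J(3) by blast
    qed
  qed
  then show ?thesis using local_max_unique[OF lS] M_def by blast
qed

lemma iso_chain:
  fixes R :: "('a,'c) ring_scheme" and S :: "('b,'d) ring_scheme"
  assumes lR: "local_ring R" and lS: "local_ring S" and iso: "h \<in> ring_iso R S"
  shows "{enat n | n. \<exists>P :: nat \<Rightarrow> 'a set. (\<forall>i\<le>n. primeideal (P i) R) \<and> (\<forall>i<n. P i \<subset> P (Suc i))}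
    \<subseteq> {enat n | n. \<exists>P :: nat \<Rightarrow> 'b set. (\<forall>i\<le>n. primeideal (P i) S) \<and> (\<forall>i<n. P i \<subset> P (Suc i))}"
proof
  fix e assume "e \<in> {enat n | n. \<exists>P :: nat \<Rightarrow> 'a set. (\<forall>i\<le>n. primeideal (P i) R) \<and> (\<forall>i<n. P i \<subset> P (Suc i))}"
  then obtain n and P :: "nat \<Rightarrow> 'a set" where e: "e = enat n" and pr: "\<forall>i\<le>n. primeideal (P i) R"
    and ch: "\<forall>i<n. P i \<subset> P (Suc i)" by blast
  note hb = iso_basic[OF lR lS iso]
  have pr': "\<forall>i\<le>n. primeideal (h ` P i) S"
  proof (intro allI impI)
    fix i assume "i \<le> n"
    then have "primeideal (P i) R" using pr by simp
    then show "primeideal (h ` P i) S" by (rule iso_prime[OF lR lS iso])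
  qed
  have ch': "\<forall>i<n. h ` P i \<subset> h ` P (Suc i)"
  proof (intro allI impI)
    fix i assume i: "i < n"
    have "primeideal (P (Suc i)) R" using pr i by simp
    then have "P (Suc i) \<subseteq> carrier R"
      using primeideal.axioms(1) ideal.axioms(1) additive_subgroup.a_subset by blast
    moreover have "P i \<subset> P (Suc i)" using ch i by blast
    moreover have "inj_on h (P (Suc i))" using inj_on_subset[OF hb(3)] calculation(1) by blast
    ultimately show "h ` P i \<subset> h ` P (Suc i)"
      using inj_on_image_eq_iff[of h "P (Suc i)" "P i" "P (Suc i)"] by blast
  qed
  show "e \<in> {enat n | n. \<exists>P :: nat \<Rightarrow> 'b set. (\<forall>i\<le>n. primeideal (P i) S) \<and> (\<forall>i<n. P i \<subset> P (Suc i))}"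
  proof -
    have "\<exists>P' :: nat \<Rightarrow> 'b set. (\<forall>i\<le>n. primeideal (P' i) S) \<and> (\<forall>i<n. P' i \<subset> P' (Suc i))"
      using pr' ch' by (intro exI[of _ "\<lambda>i. h ` P i"]) simp
    then show ?thesis using e by blast
  qed
qed

lemma iso_gen:
  fixes R :: "('a,'c) ring_scheme" and S :: "('b,'d) ring_scheme"
  assumes lR: "local_ring R" and lS: "local_ring S" and iso: "h \<in> ring_iso R S"
  shows "{n. \<exists>G. generates R G (max_ideal R) \<and> card G = n} \<subseteq> {n. \<exists>G. generates S G (max_ideal S) \<and> card G = n}"
proof
  fix n assume "n \<in> {n. \<exists>G. generates R G (max_ideal R) \<and> card G = n}"
  then obtain G where G: "generates R G (max_ideal R)" "card G = n" by blast
  note hb = iso_basic[OF lR lS iso]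
  have Gc: "G \<subseteq> carrier R" and fin: "finite G" and Gi: "Idl\<^bsub>R\<^esub> G = max_ideal R"
    using G(1) unfolding generates_def by auto
  have "generates S (h ` G) (max_ideal S)"
    unfolding generates_def using fin Gc hb(2) surj_image_Idl[OF hb(1) hb(2) Gc] Gi iso_max[OF lR lS iso] by auto
  moreover have "card (h ` G) = n" using card_image[OF inj_on_subset[OF hb(3) Gc]] G(2) by simp
  ultimately show "n \<in> {n. \<exists>G. generates S G (max_ideal S) \<and> card G = n}" by blast
qed

lemma iso_regular:
  fixes R :: "('a,'c) ring_scheme" and S :: "('b,'d) ring_scheme"
  assumes lR: "local_ring R" and lS: "local_ring S" and iso: "h \<in> ring_iso R S"
    and reg: "regular_local_ring R"
  shows "regular_local_ring S"
proof -
  interpret R: cring R using lR unfolding local_ring_def by blast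
  have iso': "inv_into (carrier R) h \<in> ring_iso S R" using ring_iso_set_sym[OF R.ring_axioms iso] .
  have k: "krull_dim S = krull_dim R"
    unfolding krull_dim_def by (rule arg_cong[where f=Sup, OF subset_antisym[OF iso_chain[OF lS lR iso'] iso_chain[OF lR lS iso]]])
  have ee: "{n. \<exists>G. generates S G (max_ideal S) \<and> card G = n} = {n. \<exists>G. generates R G (max_ideal R) \<and> card G = n}"
    by (rule subset_antisym[OF iso_gen[OF lS lR iso'] iso_gen[OF lR lS iso]])
  have e: "emb_dim S = emb_dim R"
  proof -
    have "(\<lambda>n. \<exists>G. generates S G (max_ideal S) \<and> card G = n) = (\<lambda>n. \<exists>G. generates R G (max_ideal R) \<and> card G = n)"
    proof (rule ext)
      fix n show "(\<exists>G. generates S G (max_ideal S) \<and> card G = n) = (\<exists>G. generates R G (max_ideal R) \<and> card G = n)"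
        using ee[unfolded set_eq_iff, rule_format, of n] by simp
    qed
    then show ?thesis unfolding emb_dim_def by (rule arg_cong[where f=Least])
  qed
  have "krull_dim R = enat (emb_dim R)" using reg unfolding regular_local_ring_def by blast
  then have "krull_dim S = enat (emb_dim S)" unfolding k e .
  then show ?thesis unfolding regular_local_ring_def using lS by (rule conjI[rotated])
qed

theorem corollary4p3:
  fixes A :: "'a ring" and Q :: "'b ring" and \<pi> :: "'b \<Rightarrow> 'a"
  assumes "complete_local_ring A"
    and "\<not> regular_local_ring A"
    and "minimal_cohen_presentation Q A \<pi>"
  shows "basically_regular Q A \<pi> \<and> \<not> flat_hom Q A \<pi>"
proof -
  have lA: "local_ring A" using assms(1) unfolding complete_local_ring_def by blast
  have cp: "cohen_presentation Q A \<pi>" and ker: "a_kernel Q A \<pi> \<subseteq> ideal_prod Q (max_ideal Q) (max_ideal Q)"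
    using assms(3) unfolding minimal_cohen_presentation_def by blast+
  have lQ: "local_ring Q" and regQ: "regular_local_ring Q" and hom: "\<pi> \<in> ring_hom Q A"
    and surj: "\<pi> ` carrier Q = carrier A"
    using cp unfolding cohen_presentation_def complete_local_ring_def by blast+
  have br: "basically_regular Q A \<pi>" using basic_reg_part[OF lQ lA hom surj ker] .
  have nf: "\<not> flat_hom Q A \<pi>"
  proof
    assume fl: "flat_hom Q A \<pi>"
    have inj: "inj_on \<pi> (carrier Q)" using flat_ker[OF lQ lA hom surj ker fl] .
    have iso: "\<pi> \<in> ring_iso Q A" unfolding ring_iso_def bij_betw_def using hom inj surj by blast
    have "regular_local_ring A" using iso_regular[OF lQ lA iso regQ] .
    then show False using assms(2) by simp
  qed
  show ?thesis using br nf by blast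
qed

end
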